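(* Let $T$ be a decomposition tree of a distance-hereditary graph $G$, and let $v$ be an internal node of $T$ labeled $\otimes$ with left child $v_l$ and right child $v_r$, such that property (P) holds at $v_l$ and at $v_r$. Then $\hat{min}(v)=\hat{min}(v_l)+\hat{min}(v_r)$.
   Context: All graphs are finite, simple, undirected. For a graph $H$ and $S\subseteq V(H)$, $N_H[S]$ is $S$ together with all vertices adjacent to a vertex of $S$, and $H[S]$ is the induced subgraph. Graphs carry a "twin set": a single-vertex graph on $x$ has twin set $\{x\}$. For vertex-disjoint graphs $G_l,G_r$ with twin sets $TS(G_l),TS(G_r)$: the true twin operation $G_l\otimes G_r$ has vertex set $V(G_l)\cup V(G_r)$, edge set $E(G_l)\cup E(G_r)\cup\{uw: u\in TS(G_l), w\in TS(G_r)\}$ and twin set $TS(G_l)\cup TS(G_r)$; the false twin operation $G_l\odot G_r$ has vertex set $V(G_l)\cup V(G_r)$, edge set $E(G_l)\cup E(G_r)$, twin set $TS(G_l)\cup TS(G_r)$; the attachment operation $G_l\oplus G_r$ has the same vertex and edge sets as $G_l\otimes G_r$ and twin set $TS(G_l)$. A decomposition tree $T$ of $G$ is a rooted binary tree whose leaves are in bijection with $V(G)$, each internal node having a left and a right child and a label in $\{\otimes,\odot,\oplus\}$; for each node $v$ define $\hat G(v)$ and $\hat{TS}(v)$ recursively: for a leaf $x$, the single-vertex graph on $x$ with twin set $\{x\}$; for an internal node $v$ with label $\circ$ and children $v_l,v_r$, $\hat G(v)=\hat G(v_l)\circ\hat G(v_r)$ with the corresponding twin set; one requires $\hat G(\text{root})=G$.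 Then $\hat G(v)$ is the subgraph of $G$ induced by the set $\hat V(v)$ of leaves below $v$. For a node $u$ and $0\le k\le|\hat{TS}(u)|$, call $S\subseteq\hat V(u)$ $k$-feasible if $\hat V(u)\setminus\hat{TS}(u)\subseteq N_{\hat G(u)}[S]$ and there is $X\subseteq S\cap\hat{TS}(u)$ with $|X|=k$ such that $\hat G(u)[S\setminus X]$ has a perfect matching. $\hat\gamma_k(u)$ is the minimum size of a $k$-feasible set. $\hat{min}(u)=\min\{\hat\gamma_k(u):0\le k\le|\hat{TS}(u)|\}$, and $\hat\alpha(u)$, $\hat\beta(u)$ are the smallest and the largest $k$ with $\hat\gamma_k(u)=\hat{min}(u)$. Property (P) holds at $u$ if for every $0\le k\le|\hat{TS}(u)|$: $\hat\gamma_k(u)=\hat{min}(u)+\hat\alpha(u)-k$ when $k\le\hat\alpha(u)$; $\hat\gamma_k(u)=\hat{min}(u)+k-\hat\beta(u)$ when $k\ge\hat\beta(u)$; $\hat\gamma_k(u)=\hat{min}(u)$ when $\hat\alpha(u)<k<\hat\beta(u)$ and $k-\hat\alpha(u)$ is even; and $\hat\gamma_k(u)=\hat{min}(u)+1$ otherwise. *)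

theory Defs
  imports Main "HOL-Library.Extended_Nat"
begin

definition is_graph :: "'a set \<Rightarrow> 'a set set \<Rightarrow> bool" where
  "is_graph V E \<longleftrightarrow> finite V \<and> E \<subseteq> {e. \<exists>x y. e = {x, y} \<and> x \<noteq> y \<and> x \<in> V \<and> y \<in> V}"

definition induced_edges :: "'a set set \<Rightarrow> 'a set \<Rightarrow> 'a set set" where
  "induced_edges E S = {e \<in> E. e \<subseteq> S}"

definition closed_nbhd :: "'a set \<Rightarrow> 'a set set \<Rightarrow> 'a set \<Rightarrow> 'a set" where
  "closed_nbhd V E S = S \<union> {w \<in> V. \<exists>s \<in> S. {s, w} \<in> E}"

definition has_perfect_matching :: "'a set \<Rightarrow> 'a set set \<Rightarrow> bool" where
  "has_perfect_matching W E \<longleftrightarrow>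
     (\<exists>M \<subseteq> induced_edges E W. \<forall>x \<in> W. \<exists>!e. e \<in> M \<and> x \<in> e)"

text \<open>Walks and distances (infinite if no walk exists).\<close>

definition is_walk :: "'a set \<Rightarrow> 'a set set \<Rightarrow> 'a list \<Rightarrow> bool" where
  "is_walk V E p \<longleftrightarrow> p \<noteq> [] \<and> set p \<subseteq> V \<and>
     (\<forall>i. Suc i < length p \<longrightarrow> {p ! i, p ! Suc i} \<in> E)"

definition gdist :: "'a set \<Rightarrow> 'a set set \<Rightarrow> 'a \<Rightarrow> 'a \<Rightarrow> enat" where
  "gdist V E x y = (INF p \<in> {p. is_walk V E p \<and> hd p = x \<and> last p = y}. enat (length p - 1))"

definition connected_graph :: "'a set \<Rightarrow> 'a set set \<Rightarrow> bool" where
  "connected_graph V E \<longleftrightarrow> V \<noteq> {} \<and> (\<forall>x \<in> V. \<forall>y \<in> V. gdist V E x y \<noteq> \<infinity>)"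

definition distance_hereditary :: "'a set \<Rightarrow> 'a set set \<Rightarrow> bool" where
  "distance_hereditary V E \<longleftrightarrow>
     (\<forall>W \<subseteq> V. connected_graph W (induced_edges E W) \<longrightarrow>
        (\<forall>x \<in> W. \<forall>y \<in> W. gdist W (induced_edges E W) x y = gdist V E x y))"

datatype op = TrueTwin | FalseTwin | Attach

datatype 'a dtree = Leaf 'a | Node op "'a dtree" "'a dtree"

fun hV :: "'a dtree \<Rightarrow> 'a set" where
  "hV (Leaf x) = {x}"
| "hV (Node _ l r) = hV l \<union> hV r"

fun hTS :: "'a dtree \<Rightarrow> 'a set" where
  "hTS (Leaf x) = {x}"
| "hTS (Node TrueTwin l r) = hTS l \<union> hTS r"
| "hTS (Node FalseTwin l r) = hTS l \<union> hTS r"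
| "hTS (Node Attach l r) = hTS l"

fun hE :: "'a dtree \<Rightarrow> 'a set set" where
  "hE (Leaf x) = {}"
| "hE (Node TrueTwin l r) = hE l \<union> hE r \<union> {{u, w} | u w. u \<in> hTS l \<and> w \<in> hTS r}"
| "hE (Node FalseTwin l r) = hE l \<union> hE r"
| "hE (Node Attach l r) = hE l \<union> hE r \<union> {{u, w} | u w. u \<in> hTS l \<and> w \<in> hTS r}"

text \<open>Leaves are in bijection with vertices: leaf labels are pairwise distinct.\<close>

fun distinct_leaves :: "'a dtree \<Rightarrow> bool" where
  "distinct_leaves (Leaf x) = True"
| "distinct_leaves (Node _ l r) \<longleftrightarrow> distinct_leaves l \<and> distinct_leaves r \<and> hV l \<inter> hV r = {}"

fun subtrees :: "'a dtree \<Rightarrow> 'a dtree set" where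
  "subtrees (Leaf x) = {Leaf x}"
| "subtrees (Node o' l r) = insert (Node o' l r) (subtrees l \<union> subtrees r)"

definition decomp_tree :: "'a dtree \<Rightarrow> 'a set \<Rightarrow> 'a set set \<Rightarrow> bool" where
  "decomp_tree T V E \<longleftrightarrow> distinct_leaves T \<and> hV T = V \<and> hE T = E"

definition k_feasible :: "'a dtree \<Rightarrow> nat \<Rightarrow> 'a set \<Rightarrow> bool" where
  "k_feasible u k S \<longleftrightarrow> S \<subseteq> hV u \<and>
     hV u - hTS u \<subseteq> closed_nbhd (hV u) (hE u) S \<and>
     (\<exists>X \<subseteq> S \<inter> hTS u. card X = k \<and> has_perfect_matching (S - X) (hE u))"

text \<open>Minimum size of a k-feasible set (\<infinity> if there is none).\<close>

definition hgamma :: "'a dtree \<Rightarrow> nat \<Rightarrow> enat" where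
  "hgamma u k = (INF S \<in> {S. k_feasible u k S}. enat (card S))"

definition hmin :: "'a dtree \<Rightarrow> enat" where
  "hmin u = Min ((hgamma u) ` {0..card (hTS u)})"

definition halpha :: "'a dtree \<Rightarrow> nat" where
  "halpha u = (LEAST k. k \<le> card (hTS u) \<and> hgamma u k = hmin u)"

definition hbeta :: "'a dtree \<Rightarrow> nat" where
  "hbeta u = (GREATEST k. k \<le> card (hTS u) \<and> hgamma u k = hmin u)"

definition prop_P :: "'a dtree \<Rightarrow> bool" where
  "prop_P u \<longleftrightarrow> (\<forall>k \<le> card (hTS u).
     (k \<le> halpha u \<longrightarrow> hgamma u k = hmin u + enat (halpha u - k)) \<and>
     (k \<ge> hbeta u \<longrightarrow> hgamma u k = hmin u + enat (k - hbeta u)) \<and>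
     (halpha u < k \<and> k < hbeta u \<and> even (k - halpha u) \<longrightarrow> hgamma u k = hmin u) \<and>
     (halpha u < k \<and> k < hbeta u \<and> odd (k - halpha u) \<longrightarrow> hgamma u k = hmin u + 1))"

end

theory Submission
  imports Defs
begin

lemma hTS_sub: "hTS u \<subseteq> hV u"
proof (induction u)
  case (Leaf x) then show ?case by simp
next
  case (Node o' l r) then show ?case by (cases o') auto
qed

lemma hV_fin: "finite (hV u)"
  by (induction u) auto

lemma hE_sub: "e \<in> hE u \<Longrightarrow> e \<subseteq> hV u \<and> e \<noteq> {}"
proof (induction u arbitrary: e)
  case (Leaf x) then show ?case by simp
next
  case (Node o' l r) then show ?case using hTS_sub[of l] hTS_sub[of r]
    by (cases o') auto
qed

lemma distinct_sub: "v \<in> subtrees T \<Longrightarrow> distinct_leaves T \<Longrightarrow> distinct_leaves v"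
  by (induction T) auto

lemma swap_feasible:
  "k_feasible (Node TrueTwin L R) k S = k_feasible (Node TrueTwin R L) k S"
proof -
  have "hE (Node TrueTwin L R) = hE (Node TrueTwin R L)" by (auto simp: insert_commute)
  moreover have "hV (Node TrueTwin L R) = hV (Node TrueTwin R L)" by auto
  moreover have "hTS (Node TrueTwin L R) = hTS (Node TrueTwin R L)" by auto
  ultimately show ?thesis unfolding k_feasible_def by metis
qed

lemma pm_union:
  assumes "has_perfect_matching A E1" "has_perfect_matching B E2" "A \<inter> B = {}"
    "E1 \<subseteq> E" "E2 \<subseteq> E"
  shows "has_perfect_matching (A \<union> B) E"
proof -
  obtain M1 where M1: "M1 \<subseteq> induced_edges E1 A" "\<forall>x \<in> A. \<exists>!e. e \<in> M1 \<and> x \<in> e"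
    using assms(1) unfolding has_perfect_matching_def by blast
  obtain M2 where M2: "M2 \<subseteq> induced_edges E2 B" "\<forall>x \<in> B. \<exists>!e. e \<in> M2 \<and> x \<in> e"
    using assms(2) unfolding has_perfect_matching_def by blast
  have "M1 \<union> M2 \<subseteq> induced_edges E (A \<union> B)"
    using M1(1) M2(1) assms(4,5) by (auto simp: induced_edges_def)
  moreover have "\<forall>x \<in> A \<union> B. \<exists>!e. e \<in> M1 \<union> M2 \<and> x \<in> e"
  proof
    fix x assume x: "x \<in> A \<union> B"
    show "\<exists>!e. e \<in> M1 \<union> M2 \<and> x \<in> e"
    proof (cases "x \<in> A")
      case True
      then have "x \<notin> B" using assms(3) by auto
      then have "\<forall>e \<in> M2. x \<notin> e" using M2(1) by (auto simp: induced_edges_def)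
      then show ?thesis using M1(2) True by auto
    next
      case False
      then have "x \<in> B" using x by auto
      have "\<forall>e \<in> M1. x \<notin> e" using M1(1) False by (auto simp: induced_edges_def)
      then show ?thesis using M2(2) \<open>x \<in> B\<close> by auto
    qed
  qed
  ultimately show ?thesis unfolding has_perfect_matching_def by blast
qed

lemma combine:
  assumes FL: "k_feasible L kl Sl" and FR: "k_feasible R kr Sr" and D: "hV L \<inter> hV R = {}"
  shows "k_feasible (Node TrueTwin L R) (kl + kr) (Sl \<union> Sr)"
proof -
  let ?v = "Node TrueTwin L R"
  obtain Xl where Xl: "Xl \<subseteq> Sl \<inter> hTS L" "card Xl = kl" "has_perfect_matching (Sl - Xl) (hE L)"
    using FL unfolding k_feasible_def by blast
  obtain Xr where Xr: "Xr \<subseteq> Sr \<inter> hTS R" "card Xr = kr" "has_perfect_matching (Sr - Xr) (hE R)"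
    using FR unfolding k_feasible_def by blast
  have SL: "Sl \<subseteq> hV L" "hV L - hTS L \<subseteq> closed_nbhd (hV L) (hE L) Sl" using FL by (auto simp: k_feasible_def)
  have SR: "Sr \<subseteq> hV R" "hV R - hTS R \<subseteq> closed_nbhd (hV R) (hE R) Sr" using FR by (auto simp: k_feasible_def)
  have "hV ?v - hTS ?v \<subseteq> closed_nbhd (hV ?v) (hE ?v) (Sl \<union> Sr)"
    using SL(2) SR(2) unfolding closed_nbhd_def by auto
  moreover have "Xl \<union> Xr \<subseteq> (Sl \<union> Sr) \<inter> hTS ?v" using Xl Xr by auto
  moreover have "card (Xl \<union> Xr) = kl + kr"
  proof -
    have "finite Xl" "finite Xr" using Xl(1) Xr(1) SL(1) SR(1) hV_fin finite_subset
      by (meson le_infE subset_trans)+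
    moreover have "Xl \<inter> Xr = {}" using Xl(1) Xr(1) SL(1) SR(1) D by blast
    ultimately show ?thesis using card_Un_disjoint Xl(2) Xr(2) by metis
  qed
  moreover have "has_perfect_matching ((Sl \<union> Sr) - (Xl \<union> Xr)) (hE ?v)"
  proof -
    have eq: "(Sl \<union> Sr) - (Xl \<union> Xr) = (Sl - Xl) \<union> (Sr - Xr)" using SL(1) SR(1) Xl(1) Xr(1) D by blast
    have d: "(Sl - Xl) \<inter> (Sr - Xr) = {}" using SL(1) SR(1) D by blast
    have "hE L \<subseteq> hE ?v" "hE R \<subseteq> hE ?v" by auto
    then show ?thesis unfolding eq using pm_union[OF Xl(3) Xr(3) d] by blast
  qed
  moreover have "Sl \<union> Sr \<subseteq> hV ?v" using SL(1) SR(1) by auto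
  ultimately show ?thesis unfolding k_feasible_def by blast
qed

lemma restrict:
  assumes F: "k_feasible (Node TrueTwin L R) k S" and D: "hV L \<inter> hV R = {}"
  shows "\<exists>kl \<le> card (hTS L). k_feasible L kl (S \<inter> hV L)"
proof -
  let ?v = "Node TrueTwin L R"
  have EV: "hE ?v = hE L \<union> hE R \<union> {{u, w} | u w. u \<in> hTS L \<and> w \<in> hTS R}" by simp
  have TL: "hTS L \<subseteq> hV L" "hTS R \<subseteq> hV R" by (rule hTS_sub)+
  from F have SV: "S \<subseteq> hV L \<union> hV R" and DOM: "hV ?v - hTS ?v \<subseteq> closed_nbhd (hV ?v) (hE ?v) S"
     and "\<exists>X \<subseteq> S \<inter> hTS ?v. card X = k \<and> has_perfect_matching (S - X) (hE ?v)"
    by (auto simp: k_feasible_def)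
  then obtain X M where X: "X \<subseteq> S \<inter> (hTS L \<union> hTS R)" and M: "M \<subseteq> induced_edges (hE ?v) (S - X)"
    and MU: "\<forall>x \<in> S - X. \<exists>!e. e \<in> M \<and> x \<in> e"
    unfolding has_perfect_matching_def by auto
  define A where "A = {x \<in> hV L. \<exists>e\<in>M. x \<in> e \<and> e \<inter> hV R \<noteq> {}}"
  define Y where "Y = (X \<inter> hV L) \<union> A"
  define Ml where "Ml = {e \<in> M. e \<subseteq> hV L}"
  have Y_sub: "Y \<subseteq> (S \<inter> hV L) \<inter> hTS L"
  proof
    fix x assume "x \<in> Y"
    then consider "x \<in> X" "x \<in> hV L" | "x \<in> A" by (auto simp: Y_def)
    then show "x \<in> (S \<inter> hV L) \<inter> hTS L"
    proof cases
      case 1 then show ?thesis using X D TL by auto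
    next
      case 2
      then obtain e where xL: "x \<in> hV L" and e: "e \<in> M" "x \<in> e" "e \<inter> hV R \<noteq> {}" by (auto simp: A_def)
      have eS: "e \<subseteq> S - X" "e \<in> hE ?v" using M e(1) by (auto simp: induced_edges_def)
      have "e \<notin> hE L" using hE_sub[of e L] e D by auto
      moreover have "e \<notin> hE R" using hE_sub[of e R] xL e D by auto
      ultimately obtain u w where uw: "e = {u,w}" "u \<in> hTS L" "w \<in> hTS R" using eS(2) by auto
      then have "x = u" using xL e D TL by auto
      then show ?thesis using uw eS xL by auto
    qed
  qed
  have dom: "hV L - hTS L \<subseteq> closed_nbhd (hV L) (hE L) (S \<inter> hV L)"
  proof
    fix x assume x: "x \<in> hV L - hTS L"
    then have "x \<notin> hTS R" using TL D by auto
    then have "x \<in> closed_nbhd (hV ?v) (hE ?v) S" using DOM x by auto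
    then consider "x \<in> S" | s where "s \<in> S" "{s, x} \<in> hE ?v" unfolding closed_nbhd_def by auto
    then show "x \<in> closed_nbhd (hV L) (hE L) (S \<inter> hV L)"
    proof cases
      case 1 then show ?thesis using x unfolding closed_nbhd_def by auto
    next
      case 2
      have "{s, x} \<notin> hE R" using hE_sub[of "{s,x}" R] x D by auto
      moreover have "{s, x} \<notin> {{u, w} | u w. u \<in> hTS L \<and> w \<in> hTS R}"
      proof
        assume "{s, x} \<in> {{u, w} | u w. u \<in> hTS L \<and> w \<in> hTS R}"
        then obtain u w where "{s,x} = {u,w}" "u \<in> hTS L" "w \<in> hTS R" by auto
        then show False using x TL D by (auto simp: doubleton_eq_iff)
      qed
      ultimately have "{s, x} \<in> hE L" using 2 EV by blast
      then have "s \<in> hV L" using hE_sub[of "{s,x}" L] by auto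
      then show ?thesis using x 2 \<open>{s, x} \<in> hE L\<close> unfolding closed_nbhd_def by auto
    qed
  qed
  have pm: "has_perfect_matching (S \<inter> hV L - Y) (hE L)"
    unfolding has_perfect_matching_def
  proof (intro exI[of _ Ml] conjI ballI)
    show "Ml \<subseteq> induced_edges (hE L) (S \<inter> hV L - Y)"
    proof
      fix e assume e: "e \<in> Ml"
      then have eM: "e \<in> M" "e \<subseteq> hV L" by (auto simp: Ml_def)
      have eS: "e \<subseteq> S - X" "e \<in> hE ?v" using M eM(1) by (auto simp: induced_edges_def)
      have "e \<notin> hE R" using hE_sub[of e R] eM D by auto
      moreover have "e \<notin> {{u, w} | u w. u \<in> hTS L \<and> w \<in> hTS R}" using eM TL D by auto
      ultimately have "e \<in> hE L" using eS(2) EV by blast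
      moreover have "e \<inter> A = {}"
      proof (rule ccontr)
        assume "e \<inter> A \<noteq> {}"
        then obtain x e' where x: "x \<in> e" "e' \<in> M" "x \<in> e'" "e' \<inter> hV R \<noteq> {}" by (auto simp: A_def)
        have "x \<in> S - X" using x eS by auto
        then have "e = e'" using MU x eM by blast
        then show False using x eM D by auto
      qed
      ultimately show "e \<in> induced_edges (hE L) (S \<inter> hV L - Y)"
        using eS eM unfolding induced_edges_def Y_def by auto
    qed
  next
    fix x assume x: "x \<in> S \<inter> hV L - Y"
    then have xSX: "x \<in> S - X" by (auto simp: Y_def)
    then obtain e where e: "e \<in> M" "x \<in> e" and un: "\<And>e'. e' \<in> M \<and> x \<in> e' \<Longrightarrow> e' = e"
      using MU by metis
    have "e \<in> hE ?v" using M e(1) by (auto simp: induced_edges_def)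
    then have "e \<subseteq> hV L \<union> hV R" using hE_sub[of e ?v] by auto
    moreover have "e \<inter> hV R = {}"
    proof (rule ccontr)
      assume "e \<inter> hV R \<noteq> {}"
      then have "x \<in> A" using x e unfolding A_def by auto
      then show False using x by (auto simp: Y_def)
    qed
    ultimately have "e \<subseteq> hV L" by blast
    with e(1) have "e \<in> Ml" by (simp add: Ml_def)
    show "\<exists>!e. e \<in> Ml \<and> x \<in> e"
    proof (rule ex1I[of _ e])
      show "e \<in> Ml \<and> x \<in> e" using \<open>e \<in> Ml\<close> e(2) by blast
    next
      fix e' assume "e' \<in> Ml \<and> x \<in> e'"
      then have "e' \<in> M \<and> x \<in> e'" unfolding Ml_def by blast
      then show "e' = e" by (rule un)
    qed
  qed
  have "card Y \<le> card (hTS L)"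
    using Y_sub by (intro card_mono) (auto intro: finite_subset[OF hTS_sub hV_fin])
  moreover have "k_feasible L (card Y) (S \<inter> hV L)"
    unfolding k_feasible_def using dom pm Y_sub by auto
  ultimately show ?thesis by blast
qed

lemma restrict_R:
  assumes F: "k_feasible (Node TrueTwin L R) k S" and D: "hV L \<inter> hV R = {}"
  shows "\<exists>kr \<le> card (hTS R). k_feasible R kr (S \<inter> hV R)"
  using restrict[of R L k S] F D swap_feasible by blast

lemma hmin_le_gamma: "k \<le> card (hTS u) \<Longrightarrow> hmin u \<le> hgamma u k"
  unfolding hmin_def by (rule Min_le) auto

lemma hmin_attained: "\<exists>k \<le> card (hTS u). hmin u = hgamma u k"
proof -
  have "hmin u \<in> (hgamma u) ` {0..card (hTS u)}" unfolding hmin_def by (rule Min_in) auto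
  then show ?thesis by auto
qed

lemma gamma_attained:
  assumes "hgamma u k \<noteq> \<infinity>"
  shows "\<exists>S. k_feasible u k S \<and> hgamma u k = enat (card S)"
proof -
  have "{S. k_feasible u k S} \<noteq> {}"
  proof
    assume "{S. k_feasible u k S} = {}"
    then have "hgamma u k = top" unfolding hgamma_def by simp
    then show False using assms by (simp add: top_enat_def)
  qed
  then obtain S0 where "k_feasible u k S0" by auto
  then have "hgamma u k \<in> (\<lambda>S. enat (card S)) ` {S. k_feasible u k S}"
    unfolding hgamma_def by (intro wellorder_InfI) auto
  then show ?thesis by auto
qed

theorem lemma6:
  fixes V :: "'a set" and E :: "'a set set" and T v vl vr :: "'a dtree"
  assumes "is_graph V E"
    and "distance_hereditary V E"
    and "decomp_tree T V E"
    and "v \<in> subtrees T"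
    and "v = Node TrueTwin vl vr"
    and "prop_P vl" and "prop_P vr"
  shows "hmin v = hmin vl + hmin vr"
proof -
  have "distinct_leaves v" using distinct_sub assms(3,4) unfolding decomp_tree_def by blast
  then have D: "hV vl \<inter> hV vr = {}" using assms(5) by simp
  have ge: "hmin vl + hmin vr \<le> hmin v"
  proof -
    obtain k where k: "k \<le> card (hTS v)" "hmin v = hgamma v k" using hmin_attained by blast
    have "hmin vl + hmin vr \<le> enat (card S)" if S: "k_feasible v k S" for S
    proof -
      obtain kl where kl: "kl \<le> card (hTS vl)" "k_feasible vl kl (S \<inter> hV vl)"
        using restrict[of vl vr k S] S D assms(5) by blast
      obtain kr where kr: "kr \<le> card (hTS vr)" "k_feasible vr kr (S \<inter> hV vr)"
        using restrict_R[of vl vr k S] S D assms(5) by blast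
      have "hmin vl \<le> enat (card (S \<inter> hV vl))"
        using hmin_le_gamma[OF kl(1)] kl(2) unfolding hgamma_def
        by (meson INF_lower mem_Collect_eq order_trans)
      moreover have "hmin vr \<le> enat (card (S \<inter> hV vr))"
        using hmin_le_gamma[OF kr(1)] kr(2) unfolding hgamma_def
        by (meson INF_lower mem_Collect_eq order_trans)
      moreover have "card S = card (S \<inter> hV vl) + card (S \<inter> hV vr)"
      proof -
        have SV: "S \<subseteq> hV vl \<union> hV vr" using S assms(5) by (auto simp: k_feasible_def)
        have "S = (S \<inter> hV vl) \<union> (S \<inter> hV vr)" using SV by auto
        moreover have "finite (S \<inter> hV vl)" "finite (S \<inter> hV vr)" using hV_fin by auto
        ultimately show ?thesis using card_Un_disjoint D by (metis Int_assoc Int_commute inf_bot_right inf_left_commute)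
      qed
      ultimately show ?thesis by (metis plus_enat_simps(1) add_mono)
    qed
    then have "hmin vl + hmin vr \<le> hgamma v k" unfolding hgamma_def by (auto intro: INF_greatest)
    then show ?thesis using k by simp
  qed
  have le: "hmin v \<le> hmin vl + hmin vr"
  proof (cases "hmin vl = \<infinity> \<or> hmin vr = \<infinity>")
    case True then show ?thesis by auto
  next
    case False
    obtain kl where kl: "kl \<le> card (hTS vl)" "hmin vl = hgamma vl kl" using hmin_attained by blast
    obtain kr where kr: "kr \<le> card (hTS vr)" "hmin vr = hgamma vr kr" using hmin_attained by blast
    obtain Sl where Sl: "k_feasible vl kl Sl" "hgamma vl kl = enat (card Sl)"
      using gamma_attained False kl by metis
    obtain Sr where Sr: "k_feasible vr kr Sr" "hgamma vr kr = enat (card Sr)"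
      using gamma_attained False kr by metis
    have F: "k_feasible v (kl + kr) (Sl \<union> Sr)" using combine[OF Sl(1) Sr(1) D] assms(5) by simp
    have "card (hTS v) = card (hTS vl) + card (hTS vr)"
    proof -
      have f: "finite (hTS vl)" "finite (hTS vr)" by (rule finite_subset[OF hTS_sub hV_fin])+
      have "hTS vl \<inter> hTS vr = {}" using D hTS_sub[of vl] hTS_sub[of vr] by blast
      then show ?thesis using assms(5) card_Un_disjoint[OF f] by simp
    qed
    then have "kl + kr \<le> card (hTS v)" using kl kr by simp
    then have "hmin v \<le> hgamma v (kl + kr)" by (rule hmin_le_gamma)
    also have "\<dots> \<le> enat (card (Sl \<union> Sr))" using F unfolding hgamma_def by (auto intro: INF_lower)
    also have "card (Sl \<union> Sr) = card Sl + card Sr"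
    proof -
      have "Sl \<subseteq> hV vl" "Sr \<subseteq> hV vr" using Sl(1) Sr(1) by (auto simp: k_feasible_def)
      then show ?thesis using D hV_fin by (meson card_Un_disjoint disjoint_iff finite_subset subsetD)
    qed
    finally show ?thesis using kl kr Sl Sr by simp
  qed
  show ?thesis using ge le by simp
qed

end
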